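(* Let $U(0)\geqslant 1$ and $d\geqslant 1$ be integers, $U(n)=U(0)+nd$, and let $S(n)=\overline{U(0)U(1)\cdots U(n-1)U(n)U(n-1)\cdots U(1)U(0)}$ for $n\geqslant 0$ (so $S(0)=U(0)$). Let $n\geqslant 0$ and put $$l=\left\lceil \log_{10}(n d + S(0) + 1)\right\rceil,\qquad t_l=\left\lfloor \frac{10^{l-1}-S(0)}{d}\right\rfloor .$$ Assume $t_l\geqslant 0$, $U(t_l)\geqslant 10^{l-1}$ and $U(t_l+2)<10^l$. Let $s_0=S(t_l)$, $s_1=S(t_l+1)$, $s_2=S(t_l+2)$, and $$\alpha_l=\frac{10^{3l}s_0-10^l(10^l+1)s_1+s_2}{(10^l+1)(10^l-1)^2},\qquad \mu_l=-\frac{10^{2l}s_0-(10^{2l}+1)s_1+s_2}{10^l(10^l-1)^2},$$ $$\theta_l=\frac{10^l s_0-(10^l+1)s_1+s_2}{10^l(10^l+1)(10^l-1)^2}.$$ Then $$S(n)=\alpha_l+\mu_l\,10^{l(n-t_l)}+\theta_l\,10^{2l(n-t_l)}.$$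
   Context: For positive integers $a_0,\ldots,a_k$, $\overline{a_0a_1\cdots a_k}$ denotes the integer whose decimal expansion is the decimal expansion of $a_0$ followed by that of $a_1$, ..., followed by that of $a_k$. Note $l$ is the number of decimal digits of $U(n)$; e.g. for $U(n)=n+1$ the sequence $S$ is $1,121,12321,1234321,\ldots$. *)

theory Defs
  imports Complex_Main
begin

definition ndigits :: "nat \<Rightarrow> nat" where
  "ndigits a = (LEAST k. a < 10 ^ k)"

definition concat_dec :: "nat list \<Rightarrow> nat" where
  "concat_dec xs = foldl (\<lambda>acc a. acc * 10 ^ ndigits a + a) 0 xs"

definition APU :: "nat \<Rightarrow> nat \<Rightarrow> nat \<Rightarrow> nat" where
  "APU U0 d k = U0 + k * d"

definition Sseq :: "nat \<Rightarrow> nat \<Rightarrow> nat \<Rightarrow> nat" where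
  "Sseq U0 d n = concat_dec (map (APU U0 d) [0..<n] @ [APU U0 d n] @ rev (map (APU U0 d) [0..<n]))"

end

theory Submission imports Defs begin

lemma foldl_cd: "foldl (\<lambda>acc a. acc * 10 ^ ndigits a + a) acc ys
   = acc * 10 ^ sum_list (map ndigits ys) + foldl (\<lambda>acc a. acc * 10 ^ ndigits a + a) 0 ys"
proof (induction ys arbitrary: acc)
  case Nil then show ?case by simp
next
  case (Cons y ys)
  let ?f = "(\<lambda>acc a. acc * 10 ^ ndigits a + (a::nat))"
  let ?F = "foldl ?f 0 ys"
  have 1: "foldl ?f acc (y # ys) = (acc * 10 ^ ndigits y + y) * 10 ^ sum_list (map ndigits ys) + ?F"
    using Cons.IH[of "acc * 10 ^ ndigits y + y"] by (simp only: foldl_Cons)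
  have 2: "foldl ?f 0 (y # ys) = y * 10 ^ sum_list (map ndigits ys) + ?F"
    using Cons.IH[of "0 * 10 ^ ndigits y + y"] by (simp only: foldl_Cons mult_0 add_0)
  show ?case unfolding 1 2 by (simp add: algebra_simps power_add)
qed

lemma concat_app: "concat_dec (xs @ ys) = concat_dec xs * 10 ^ sum_list (map ndigits ys) + concat_dec ys"
  unfolding concat_dec_def foldl_append by (rule foldl_cd)

lemma concat_single: "concat_dec [a] = a"
  unfolding concat_dec_def by simp

lemma ndigits_eq: assumes "k \<ge> 1" "10^(k-1) \<le> a" "a < (10::nat)^k" shows "ndigits a = k"
  unfolding ndigits_def
proof (rule Least_equality)
  show "a < 10^k" by fact
  fix j assume "a < (10::nat)^j"
  show "k \<le> j"
  proof (rule ccontr)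
    assume "\<not> k \<le> j"
    then have "j \<le> k - 1" by simp
    then have "(10::nat)^j \<le> 10^(k-1)" by (rule power_increasing) simp
    with assms(2) \<open>a < 10^j\<close> show False by linarith
  qed
qed

definition Pn :: "nat \<Rightarrow> nat \<Rightarrow> nat \<Rightarrow> nat" where "Pn U0 d k = concat_dec (map (APU U0 d) [0..<k])"
definition Rn :: "nat \<Rightarrow> nat \<Rightarrow> nat \<Rightarrow> nat" where "Rn U0 d k = concat_dec (rev (map (APU U0 d) [0..<k]))"
definition rn :: "nat \<Rightarrow> nat \<Rightarrow> nat \<Rightarrow> nat" where "rn U0 d k = sum_list (map ndigits (map (APU U0 d) [0..<k]))"

lemma rn_rev: "sum_list (map ndigits (rev (map (APU U0 d) [0..<k]))) = rn U0 d k"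
  unfolding rn_def by (simp only: rev_map[symmetric] sum_list_rev)

lemma S_split: "Sseq U0 d k = (Pn U0 d k * 10 ^ ndigits (APU U0 d k) + APU U0 d k) * 10 ^ rn U0 d k + Rn U0 d k"
proof -
  let ?L = "map (APU U0 d) [0..<k]"
  have "Sseq U0 d k = concat_dec ((?L @ [APU U0 d k]) @ rev ?L)" unfolding Sseq_def by simp
  also have "\<dots> = concat_dec (?L @ [APU U0 d k]) * 10 ^ rn U0 d k + Rn U0 d k"
    unfolding concat_app rn_rev Rn_def ..
  also have "concat_dec (?L @ [APU U0 d k]) = Pn U0 d k * 10 ^ ndigits (APU U0 d k) + APU U0 d k"
    unfolding concat_app Pn_def by (simp add: concat_single)
  finally show ?thesis .
qed

lemma P_suc: "Pn U0 d (Suc k) = Pn U0 d k * 10 ^ ndigits (APU U0 d k) + APU U0 d k"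
  unfolding Pn_def by (simp add: concat_app concat_single)

lemma R_suc: "Rn U0 d (Suc k) = APU U0 d k * 10 ^ rn U0 d k + Rn U0 d k"
proof -
  have "Rn U0 d (Suc k) = concat_dec ([APU U0 d k] @ rev (map (APU U0 d) [0..<k]))"
    unfolding Rn_def by simp
  then show ?thesis unfolding concat_app rn_rev concat_single Rn_def .
qed

lemma r_suc: "rn U0 d (Suc k) = rn U0 d k + ndigits (APU U0 d k)"
  unfolding rn_def by simp

lemma closed_form:
  fixes U0 d T L :: nat
  assumes L1: "L \<ge> 1" and low: "10^(L-1) \<le> APU U0 d T"
  shows "\<exists>A B C. \<forall>m. APU U0 d (T+m) < 10^L \<longrightarrow>
     real (Sseq U0 d (T+m)) = A + B * ((10::real)^L)^m + C * ((10::real)^L)^(2*m)"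
proof -
  define x :: real where "x = 10^L"
  define c :: real where "c = 10 ^ rn U0 d T"
  define u :: real where "u = real (APU U0 d T)"
  define dd :: real where "dd = real d"
  define e where "e = - dd / (x - 1)"
  define b where "b = (e - u) / (x - 1)"
  define a where "a = real (Pn U0 d T) - b"
  define e' where "e' = dd * c / (x - 1)"
  define b' where "b' = (u * c - x * e') / (x - 1)"
  define a' where "a' = real (Rn U0 d T) - b'"
  have x1: "x > 1" unfolding x_def using L1 by simp
  have ex: "e * x = e - dd" unfolding e_def using x1 by (simp add: field_simps)
  have bx: "b * x = b + e - u" unfolding b_def using x1 by (simp add: field_simps)
  have e'x: "e' * x = e' + dd * c" unfolding e'_def using x1 by (simp add: field_simps)
  have b'x: "b' * x = u * c + b' - e' - dd * c" unfolding b'_def using x1 e'x by (simp add: field_simps)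
  have ec: "e * c + e' = 0" unfolding e_def e'_def using x1 by (simp add: field_simps)
  have U_m: "real (APU U0 d (T+m)) = u + real m * dd" for m
    unfolding u_def dd_def APU_def by (simp add: algebra_simps)
  have mono: "APU U0 d i \<le> APU U0 d j" if "i \<le> j" for i j
    unfolding APU_def using that by (simp add: mult_le_mono1)
  have nd: "ndigits (APU U0 d (T+m)) = L" if "APU U0 d (T+m) < 10^L" for m
    using ndigits_eq[OF L1 _ that] low mono[of T "T+m"] by simp
  have key: "APU U0 d (T+m) < 10^L \<longrightarrow>
      real (Pn U0 d (T+m)) = a*x^m + b + e*m \<and> real (Rn U0 d (T+m)) = a' + (b'+e'*m)*x^m
      \<and> (10::real)^(rn U0 d (T+m)) = c*x^m" for m
  proof (induction m)
    case 0 then show ?case unfolding a_def a'_def c_def by simp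
  next
    case (Suc m)
    show ?case
    proof
      assume h: "APU U0 d (T + Suc m) < 10 ^ L"
      then have h': "APU U0 d (T + m) < 10 ^ L" using mono[of "T+m" "T + Suc m"] by simp
      from Suc.IH h' have P: "real (Pn U0 d (T+m)) = a*x^m + b + e*m"
        and R: "real (Rn U0 d (T+m)) = a' + (b'+e'*m)*x^m"
        and r: "(10::real)^(rn U0 d (T+m)) = c*x^m" by auto
      have ndm: "ndigits (APU U0 d (T+m)) = L" using nd[OF h'] .
      have "real (Pn U0 d (T + Suc m)) = real (Pn U0 d (T+m)) * x + real (APU U0 d (T+m))"
        unfolding x_def using P_suc[of U0 d "T+m"] ndm by simp
      also have "\<dots> = a*x^(Suc m) + b*x + (e*x)*m + u + m*dd" unfolding P U_m by (simp add: algebra_simps)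
      also have "\<dots> = a*x^(Suc m) + b + e * (Suc m)" unfolding bx ex by (simp add: algebra_simps)
      finally have P': "real (Pn U0 d (T + Suc m)) = a*x^(Suc m) + b + e * (Suc m)" .
      have "real (Rn U0 d (T + Suc m)) = real (APU U0 d (T+m)) * 10 ^ rn U0 d (T+m) + real (Rn U0 d (T+m))"
        using R_suc[of U0 d "T+m"] by simp
      also have "\<dots> = (u + m*dd) * c * x^m + a' + (b'+e'*m)*x^m" unfolding U_m R r by simp
      also have "\<dots> = a' + (b' + e' * m + dd * c * m + u * c) * x^m"
        by (simp add: algebra_simps)
      also have "\<dots> = a' + (b' * x + (e' * x) * m + e' * x) * x^m"
        unfolding b'x e'x by (simp add: algebra_simps)
      also have "\<dots> = a' + (b' + e' * (Suc m)) * x^(Suc m)" by (simp add: algebra_simps)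
      finally have R': "real (Rn U0 d (T + Suc m)) = a' + (b' + e' * (Suc m)) * x^(Suc m)" .
      have "(10::real)^(rn U0 d (T + Suc m)) = 10^(rn U0 d (T+m)) * x"
        unfolding x_def using r_suc[of U0 d "T+m"] ndm by (simp add: power_add)
      also have "\<dots> = c * x^(Suc m)" unfolding r by simp
      finally show "real (Pn U0 d (T + Suc m)) = a*x^(Suc m) + b + e * (Suc m) \<and>
          real (Rn U0 d (T + Suc m)) = a' + (b' + e' * (Suc m)) * x^(Suc m) \<and>
          (10::real)^(rn U0 d (T + Suc m)) = c * x^(Suc m)" using P' R' by simp
    qed
  qed
  show ?thesis
  proof (intro exI allI impI)
    fix m assume h: "APU U0 d (T+m) < 10^L"
    from key h have P: "real (Pn U0 d (T+m)) = a*x^m + b + e*m"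
        and R: "real (Rn U0 d (T+m)) = a' + (b'+e'*m)*x^m"
        and r: "(10::real)^(rn U0 d (T+m)) = c*x^m" by auto
    have "real (Sseq U0 d (T+m)) = (real (Pn U0 d (T+m)) * x + real (APU U0 d (T+m))) * 10^(rn U0 d (T+m)) + real (Rn U0 d (T+m))"
      unfolding x_def using S_split[of U0 d "T+m"] nd[OF h] by simp
    also have "\<dots> = ((a*x^m + b + e*m) * x + u + m * dd) * (c*x^m) + a' + (b'+e'*m)*x^m"
      unfolding P R r U_m by simp
    also have "\<dots> = a' + (b*x*c + u*c + b') * x^m + (a*c*x) * (x^m * x^m) + m * x^m * ((e*x)*c + dd*c + e')"
      by (simp add: algebra_simps)
    also have "(e*x)*c + dd*c + e' = 0" unfolding ex using ec by (simp add: algebra_simps)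
    finally show "real (Sseq U0 d (T+m)) = a' + (b*x*c + u*c + b') * ((10::real)^L)^m + (a*c*x) * ((10::real)^L)^(2*m)"
      unfolding x_def by (simp add: power_mult[symmetric] mult_2 power_add)
  qed
qed

lemma idA: "(x::real)^3 * (A+B+C) - x*(x+1)*(A+B*x+C*x^2) + (A + B*x^2 + C*x^4) = A * ((x+1)*(x-1)^2)"
  by algebra
lemma idB: "(x::real)^2 * (A+B+C) - (x^2+1)*(A+B*x+C*x^2) + (A + B*x^2 + C*x^4) = - (B * (x*(x-1)^2))"
  by algebra
lemma idC: "(x::real) * (A+B+C) - (x+1)*(A+B*x+C*x^2) + (A + B*x^2 + C*x^4) = C * (x*(x+1)*(x-1)^2)"
  by algebra

theorem theorem3:
  fixes U0 d n :: nat and l t :: int and s0 s1 s2 \<alpha> \<mu> \<theta> :: real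
  assumes "U0 \<ge> 1" and "d \<ge> 1"
    and l_def: "l = \<lceil>log 10 (real (n * d + Sseq U0 d 0 + 1))\<rceil>"
    and t_def: "t = \<lfloor>((10::real) powi (l - 1) - real (Sseq U0 d 0)) / real d\<rfloor>"
    and "t \<ge> 0"
    and "real (APU U0 d (nat t)) \<ge> (10::real) powi (l - 1)"
    and "real (APU U0 d (nat t + 2)) < (10::real) powi l"
    and "s0 = real (Sseq U0 d (nat t))"
    and "s1 = real (Sseq U0 d (nat t + 1))"
    and "s2 = real (Sseq U0 d (nat t + 2))"
    and "\<alpha> = ((10::real) powi (3*l) * s0 - 10 powi l * (10 powi l + 1) * s1 + s2)
              / ((10 powi l + 1) * (10 powi l - 1)^2)"
    and "\<mu> = - (((10::real) powi (2*l) * s0 - (10 powi (2*l) + 1) * s1 + s2)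
              / (10 powi l * (10 powi l - 1)^2))"
    and "\<theta> = ((10::real) powi l * s0 - (10 powi l + 1) * s1 + s2)
              / (10 powi l * (10 powi l + 1) * (10 powi l - 1)^2)"
  shows "real (Sseq U0 d n) = \<alpha> + \<mu> * (10::real) powi (l * (int n - t))
           + \<theta> * (10::real) powi (2 * l * (int n - t))"
proof -
  note as = assms
  have S0: "Sseq U0 d 0 = U0" unfolding Sseq_def by (simp add: concat_single APU_def)
  define Vn where "Vn = APU U0 d n"
  have Vn_eq: "n * d + Sseq U0 d 0 = Vn" unfolding Vn_def S0 APU_def by simp
  have lc: "l = \<lceil>log 10 (real Vn + 1)\<rceil>" using l_def unfolding Vn_eq by (simp add: add.commute)
  have Vn1: "real Vn + 1 > 1" unfolding Vn_def APU_def using \<open>U0 \<ge> 1\<close> by (simp add: add_pos_nonneg)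
  have lpos: "log 10 (real Vn + 1) > 0" using Vn1 by simp
  have "l \<ge> 1" using lc lpos by linarith
  define L where "L = nat l"
  have lL: "l = int L" and L1: "L \<ge> 1" unfolding L_def using \<open>l \<ge> 1\<close> by auto
  have c1: "real_of_int l - 1 < log 10 (real Vn + 1)" and c2: "log 10 (real Vn + 1) \<le> real_of_int l"
    using ceiling_correct[of "log 10 (real Vn + 1)"] lc by auto
  have ten: "(1::real) < 10" by simp
  have Vnp: "real Vn + 1 > 0" using Vn1 by linarith
  have "real (L - 1) < log 10 (real Vn + 1)" using c1 lL L1 by (simp add: of_nat_diff)
  then have "10 powr (real (L - 1)) < real Vn + 1" using less_log_iff[OF ten Vnp] by blast
  then have "(10::real)^(L-1) < real Vn + 1" by (simp add: powr_realpow)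
  then have "real ((10::nat)^(L-1)) < real (Vn + 1)" by simp
  then have "(10::nat)^(L-1) < Vn + 1" by (simp only: of_nat_less_iff)
  then have Vnlow: "10^(L-1) \<le> Vn" by simp
  have "log 10 (real Vn + 1) \<le> real L" using c2 lL by simp
  then have "\<not> (10 powr (real L) < real Vn + 1)" using less_log_iff[OF ten Vnp] by (meson not_less)
  then have "real Vn + 1 \<le> (10::real)^L" by (simp add: powr_realpow)
  then have "real (Vn + 1) \<le> real ((10::nat)^L)" by simp
  then have Vnhigh: "Vn < 10^L" by (simp only: of_nat_le_iff)
  define T where "T = nat t"
  have tT: "t = int T" unfolding T_def using \<open>t \<ge> 0\<close> by simp
  have p1: "(10::real) powi (l - 1) = 10^(L-1)" using L1 lL
    by (metis of_nat_1 of_nat_diff power_int_of_nat)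
  have "real_of_int t \<le> ((10::real) powi (l - 1) - real (Sseq U0 d 0)) / real d"
    using t_def by simp
  then have "real T * real d \<le> 10^(L-1) - real U0"
    using tT p1 S0 \<open>d \<ge> 1\<close> by (simp add: field_simps)
  then have "real (APU U0 d T) \<le> real (10^(L-1))" unfolding APU_def by simp
  then have "APU U0 d T \<le> Vn" using Vnlow by linarith
  then have "T \<le> n" unfolding Vn_def APU_def using \<open>d \<ge> 1\<close> by simp
  define m where "m = n - T"
  have nTm: "n = T + m" unfolding m_def using \<open>T \<le> n\<close> by simp
  have low: "10^(L-1) \<le> APU U0 d T" using as(6) p1 T_def
    by (metis of_nat_le_iff of_nat_numeral of_nat_power)
  obtain A B C where ABC: "\<And>m. APU U0 d (T+m) < 10^L \<Longrightarrow>
     real (Sseq U0 d (T+m)) = A + B * ((10::real)^L)^m + C * ((10::real)^L)^(2*m)"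
    using closed_form[OF L1 low] by blast
  define x :: real where "x = 10^L"
  have x1: "x > 1" unfolding x_def using L1 by simp
  have pl: "(10::real) powi l = x" unfolding x_def lL by simp
  have h2: "APU U0 d (T+2) < 10^L" using as(7) pl unfolding x_def T_def
    by (metis of_nat_less_iff of_nat_numeral of_nat_power)
  have h1: "APU U0 d (T+1) < 10^L" using h2 unfolding APU_def by simp
  have h0: "APU U0 d (T+0) < 10^L" using h2 unfolding APU_def by simp
  have s0: "s0 = A + B + C" using ABC[OF h0] as(8) T_def by simp
  have s1: "s1 = A + B * x + C * x^2" using ABC[OF h1] as(9) T_def x_def by simp
  have s2: "s2 = A + B * x^2 + C * x^4" using ABC[OF h2] as(10) T_def x_def
    by (simp add: power_mult[symmetric])
  have p2: "(10::real) powi (2*l) = x^2" unfolding x_def lL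
    by (metis of_nat_mult of_nat_numeral power_int_of_nat power_mult mult.commute)
  have p3: "(10::real) powi (3*l) = x^3" unfolding x_def lL
    by (metis of_nat_mult of_nat_numeral power_int_of_nat power_mult mult.commute)
  have xne: "x - 1 \<noteq> 0" "x + 1 \<noteq> 0" "x \<noteq> 0" using x1 by auto
  have dA: "(x+1)*(x-1)^2 \<noteq> 0" "x*(x-1)^2 \<noteq> 0" "x*(x+1)*(x-1)^2 \<noteq> 0" using xne by auto
  have al: "\<alpha> = A" using as(11) unfolding pl p3 s0 s1 s2 idA using dA(1) by simp
  have mu: "\<mu> = B" using as(12) unfolding pl p2 s0 s1 s2 idB using dA(2) by simp
  have th: "\<theta> = C" using as(13) unfolding pl s0 s1 s2 idC using dA(3) by simp
  have q1: "(10::real) powi (l * (int n - t)) = x^m" unfolding x_def lL tT nTm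
    by (simp add: power_mult[symmetric] flip: of_nat_mult)
  have q2e: "2 * l * (int n - t) = int (L * (2*m))" unfolding lL tT nTm by simp
  have q2: "(10::real) powi (2 * l * (int n - t)) = x^(2*m)" unfolding x_def q2e power_int_of_nat
    by (simp add: power_mult)
  have "real (Sseq U0 d n) = A + B * x^m + C * x^(2*m)"
    using ABC[of m] Vnhigh unfolding x_def Vn_def nTm by simp
  then show ?thesis unfolding q1 q2 al mu th .
qed

end
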